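(* Let $q$ be an odd prime power, $d$ a positive integer, and $\varphi_d$ the coloring defined below. If $S \subseteq (\mathbb{F}_q^* )^d$ is a set of $p\ge 1$ vectors with a leftover structure under $\varphi_d$, then $\mathrm{FS}(S) \ge \lceil \log_2 p\rceil + 1$.
   Context: $\mathbb{F}_q^*$ is the set of nonzero elements of $\mathbb{F}_q$, endowed with an arbitrary fixed linear order; $(\mathbb{F}_q^* )^d$ is ordered lexicographically with respect to it. Let $C_d = \mathrm{DOT} \sqcup \mathrm{ZERO}\sqcup\mathrm{UP}\sqcup\mathrm{DOWN}$, where $\mathrm{DOT} = \mathbb{F}_q^*$ and ZERO, UP, DOWN are three disjoint copies of $\{1,\dots,d\}\times \mathbb{F}_q$. For distinct $x<y$ in $(\mathbb{F}_q^* )^d$, let $i$ be the first coordinate where $x$ and $y$ differ, and $x\cdot y$ the standard dot product; $\varphi_d(x,y)=\varphi_d(y,x)$ is $(i,x_i+y_i)$ in ZERO if $x\cdot y=0$; $(i,x_i+y_i)$ in UP if $x\cdot y\ne 0$ and $x\cdot y=x\cdot x$; $(i,x_i+y_i)$ in DOWN if $x\cdot y\notin\{0,x\cdot x\}$ and $x\cdot y=y\cdot y$; and $x\cdot y\in\mathrm{DOT}$ otherwise. For a vertex set $A$, $\varphi_d(A)$ is the set of colors on pairs inside $A$. $S$ has a leftover structure under $\varphi_d$ if $|S|=1$, or $S$ has a partition $S=A\cup B$ into nonempty sets such that $A$ and $B$ each have a leftover structure, $\varphi_d(A)\cap\varphi_d(B)=\emptyset$, and there is a color $\gamma$ with $\varphi_d(a,b)=\gamma$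 for all $a\in A$, $b\in B$ and $\gamma\notin\varphi_d(A)\cup\varphi_d(B)$. Distinct vectors $s_1,\dots,s_t$ form a $t$-falling star if there are colors $\alpha_2,\dots,\alpha_t$ with $\varphi_d(s_i,s_j)=\alpha_i$ for all $1\le j<i\le t$; $\mathrm{FS}(S)$ is the maximum $t$ such that $S$ contains a $t$-falling star. *)

theory Defs
  imports Complex_Main
begin

text \<open>The field F_q is an arbitrary
  finite field type; the fixed linear order on F_q^* is a parameter lt.\<close>

definition vecs :: "nat \<Rightarrow> (nat \<Rightarrow> 'a::zero) set" where
  "vecs d = {x. (\<forall>i<d. x i \<noteq> 0) \<and> (\<forall>i\<ge>d. x i = 0)}"

definition strict_linorder_on :: "'a set \<Rightarrow> ('a \<Rightarrow> 'a \<Rightarrow> bool) \<Rightarrow> bool" where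
  "strict_linorder_on A lt \<longleftrightarrow>
     (\<forall>a\<in>A. \<not> lt a a) \<and>
     (\<forall>a\<in>A. \<forall>b\<in>A. \<forall>c\<in>A. lt a b \<longrightarrow> lt b c \<longrightarrow> lt a c) \<and>
     (\<forall>a\<in>A. \<forall>b\<in>A. a \<noteq> b \<longrightarrow> lt a b \<or> lt b a)"

definition dotp :: "nat \<Rightarrow> (nat \<Rightarrow> 'a::comm_ring_1) \<Rightarrow> (nat \<Rightarrow> 'a) \<Rightarrow> 'a" where
  "dotp d x y = (\<Sum>i<d. x i * y i)"

definition first_diff :: "(nat \<Rightarrow> 'a) \<Rightarrow> (nat \<Rightarrow> 'a) \<Rightarrow> nat" where
  "first_diff x y = (LEAST i. x i \<noteq> y i)"

definition lex_less :: "('a \<Rightarrow> 'a \<Rightarrow> bool) \<Rightarrow> (nat \<Rightarrow> 'a) \<Rightarrow> (nat \<Rightarrow> 'a) \<Rightarrow> bool" where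
  "lex_less lt x y \<longleftrightarrow> x \<noteq> y \<and> lt (x (first_diff x y)) (y (first_diff x y))"

datatype 'a color = DOT 'a | ZERO nat 'a | UP nat 'a | DOWN nat 'a

definition col_ord :: "nat \<Rightarrow> (nat \<Rightarrow> 'a::field) \<Rightarrow> (nat \<Rightarrow> 'a) \<Rightarrow> 'a color" where
  "col_ord d x y =
     (let i = first_diff x y; s = x i + y i in
      if dotp d x y = 0 then ZERO i s
      else if dotp d x y = dotp d x x then UP i s
      else if dotp d x y = dotp d y y then DOWN i s
      else DOT (dotp d x y))"

definition phi :: "('a \<Rightarrow> 'a \<Rightarrow> bool) \<Rightarrow> nat \<Rightarrow> (nat \<Rightarrow> 'a::field) \<Rightarrow> (nat \<Rightarrow> 'a) \<Rightarrow> 'a color" where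
  "phi lt d x y = (if lex_less lt x y then col_ord d x y else col_ord d y x)"

definition colors :: "('a \<Rightarrow> 'a \<Rightarrow> bool) \<Rightarrow> nat \<Rightarrow> (nat \<Rightarrow> 'a::field) set \<Rightarrow> 'a color set" where
  "colors lt d A = {phi lt d a b | a b. a \<in> A \<and> b \<in> A \<and> a \<noteq> b}"

inductive leftover :: "('a \<Rightarrow> 'a \<Rightarrow> bool) \<Rightarrow> nat \<Rightarrow> (nat \<Rightarrow> 'a::field) set \<Rightarrow> bool"
  for lt d where
  single: "leftover lt d {x}"
| join: "\<lbrakk> A \<noteq> {}; B \<noteq> {}; A \<inter> B = {}; leftover lt d A; leftover lt d B;
          colors lt d A \<inter> colors lt d B = {};
          \<forall>a\<in>A. \<forall>b\<in>B. phi lt d a b = \<gamma>;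
          \<gamma> \<notin> colors lt d A \<union> colors lt d B \<rbrakk> \<Longrightarrow> leftover lt d (A \<union> B)"

definition falling_star :: "('a \<Rightarrow> 'a \<Rightarrow> bool) \<Rightarrow> nat \<Rightarrow> (nat \<Rightarrow> 'a::field) set
    \<Rightarrow> (nat \<Rightarrow> (nat \<Rightarrow> 'a)) \<Rightarrow> nat \<Rightarrow> bool" where
  "falling_star lt d S s t \<longleftrightarrow>
     s ` {1..t} \<subseteq> S \<and> inj_on s {1..t} \<and>
     (\<forall>i\<in>{2..t}. \<exists>\<alpha>. \<forall>j\<in>{1..<i}. phi lt d (s i) (s j) = \<alpha>)"

definition FS :: "('a \<Rightarrow> 'a \<Rightarrow> bool) \<Rightarrow> nat \<Rightarrow> (nat \<Rightarrow> 'a::field) set \<Rightarrow> nat" where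
  "FS lt d S = Max {t. \<exists>s. falling_star lt d S s t}"

end

theory Submission
  imports Defs
begin

lemma fd_sym: "first_diff x y = first_diff y x"
  unfolding first_diff_def by (rule arg_cong[where f=Least]) auto

lemma phi_sym:
  assumes lo: "strict_linorder_on (UNIV - {0}) lt" and x: "x \<in> vecs d" and y: "y \<in> vecs d"
  shows "phi lt d x y = phi lt d y x"
proof (cases "x = y")
  case True then show ?thesis by simp
next
  case False
  define i where "i = first_diff x y"
  have ex: "\<exists>k. x k \<noteq> y k" using False by auto
  have ne: "x i \<noteq> y i" unfolding i_def first_diff_def using LeastI_ex[OF ex] .
  have "i < d"
  proof (rule ccontr)
    assume "\<not> i < d" then have "x i = 0" "y i = 0" using x y by (auto simp: vecs_def)
    with ne show False by simp
  qed
  then have nz: "x i \<noteq> 0" "y i \<noteq> 0" using x y by (auto simp: vecs_def)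
  have fi: "first_diff y x = i" unfolding i_def by (rule fd_sym[symmetric])
  note L = lo[unfolded strict_linorder_on_def]
  note L1 = conjunct1[OF L] and L2 = conjunct1[OF conjunct2[OF L]] and L3 = conjunct2[OF conjunct2[OF L]]
  have xi: "x i \<in> UNIV - {0}" and yi: "y i \<in> UNIV - {0}" using nz by auto
  have tot: "lt (x i) (y i) \<or> lt (y i) (x i)" using L3[rule_format, OF xi yi ne] .
  have anti: "\<not> (lt (x i) (y i) \<and> lt (y i) (x i))"
  proof
    assume h: "lt (x i) (y i) \<and> lt (y i) (x i)"
    have "lt (x i) (x i)" using L2[rule_format, OF xi yi xi] h by blast
    then show False using L1[rule_format, OF xi] by blast
  qed
  have yx: "y \<noteq> x" using False by auto
  have fx: "first_diff x y = i" by (simp add: i_def)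
  show ?thesis
  proof (cases "lt (x i) (y i)")
    case True
    then have "lex_less lt x y" "\<not> lex_less lt y x" unfolding lex_less_def fx fi using True anti False by blast+
    then show ?thesis unfolding phi_def by simp
  next
    case c: False
    then have "lt (y i) (x i)" using tot by blast
    then have "\<not> lex_less lt x y" "lex_less lt y x" unfolding lex_less_def fx fi using c \<open>lt (y i) (x i)\<close> False by blast+
    then show ?thesis unfolding phi_def by simp
  qed
qed

lemma fs_mono: "falling_star lt d A s t \<Longrightarrow> A \<subseteq> B \<Longrightarrow> falling_star lt d B s t"
  unfolding falling_star_def by blast

lemma fs_ext:
  assumes fs: "falling_star lt d A s t" and xA: "x \<notin> A"
    and g: "\<forall>j\<in>{1..t}. phi lt d x (s j) = g"
  shows "falling_star lt d (insert x A) (s(Suc t := x)) (Suc t)"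
proof -
  have im: "s ` {1..t} \<subseteq> A" and inj: "inj_on s {1..t}"
    and st: "\<forall>i\<in>{2..t}. \<exists>\<alpha>. \<forall>j\<in>{1..<i}. phi lt d (s i) (s j) = \<alpha>"
    using fs unfolding falling_star_def by auto
  have iv: "{1..Suc t} = insert (Suc t) {1..t}" by auto
  have e1: "(s(Suc t := x)) ` {1..t} = s ` {1..t}" by (rule image_cong) auto
  have "(s(Suc t := x)) ` {1..Suc t} = insert x (s ` {1..t})" unfolding iv image_insert e1 by simp
  then have "(s(Suc t := x)) ` {1..Suc t} \<subseteq> insert x A" using im by auto
  moreover have "inj_on (s(Suc t := x)) {1..Suc t}"
  proof -
    have i1: "inj_on (s(Suc t := x)) {1..t}" using inj by (rule inj_on_cong[THEN iffD2, rotated]) auto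
    have "x \<notin> s ` {1..t}" using im xA by blast
    then have "(s(Suc t := x)) (Suc t) \<notin> (s(Suc t := x)) ` ({1..t} - {Suc t})" using e1 by simp
    then show ?thesis unfolding iv inj_on_insert using i1 by simp
  qed
  moreover have "\<forall>i\<in>{2..Suc t}. \<exists>\<alpha>. \<forall>j\<in>{1..<i}. phi lt d ((s(Suc t := x)) i) ((s(Suc t := x)) j) = \<alpha>"
  proof
    fix i assume i: "i \<in> {2..Suc t}"
    show "\<exists>\<alpha>. \<forall>j\<in>{1..<i}. phi lt d ((s(Suc t := x)) i) ((s(Suc t := x)) j) = \<alpha>"
    proof (cases "i = Suc t")
      case True
      then show ?thesis using g by (intro exI[of _ g]) auto
    next
      case False
      then have "i \<in> {2..t}" using i by auto
      then obtain \<alpha> where "\<forall>j\<in>{1..<i}. phi lt d (s i) (s j) = \<alpha>" using st by blast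
      then show ?thesis using False i by (intro exI[of _ \<alpha>]) auto
    qed
  qed
  ultimately show ?thesis unfolding falling_star_def by blast
qed

lemma main:
  assumes "leftover lt d S" and "S \<subseteq> vecs d" and lo: "strict_linorder_on (UNIV - {0}) lt"
  shows "finite S \<and> (\<exists>s t. t \<ge> 1 \<and> falling_star lt d S s t \<and> card S \<le> 2^(t-1))"
  using assms(1,2)
proof (induction rule: leftover.induct)
  case (single x)
  have "falling_star lt d {x} (\<lambda>_. x) 1" unfolding falling_star_def by auto
  then show ?case by (intro conjI exI[of _ "\<lambda>_. x"] exI[of _ 1]) auto
next
  case (join A B \<gamma>)
  from join.IH(1) join.prems obtain sA tA where A: "finite A" "tA \<ge> 1"
    "falling_star lt d A sA tA" "card A \<le> 2^(tA-1)" by auto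
  from join.IH(2) join.prems obtain sB tB where B: "finite B" "tB \<ge> 1"
    "falling_star lt d B sB tB" "card B \<le> 2^(tB-1)" by auto
  have cu: "card (A \<union> B) = card A + card B" using A(1) B(1) join.hyps(3) card_Un_disjoint by blast
  show ?case
  proof (cases "card B \<le> card A")
    case True
    obtain b where b: "b \<in> B" using join.hyps(2) by blast
    have bA: "b \<notin> A" using b join.hyps(3) by blast
    have "\<forall>j\<in>{1..tA}. phi lt d b (sA j) = \<gamma>"
    proof
      fix j assume "j \<in> {1..tA}"
      then have "sA j \<in> A" using A(3) unfolding falling_star_def by blast
      then show "phi lt d b (sA j) = \<gamma>" using phi_sym[OF lo, of b d "sA j"] join.hyps(7) b join.prems
        by auto
    qed
    from fs_ext[OF A(3) bA this] have "falling_star lt d (A \<union> B) (sA(Suc tA := b)) (Suc tA)"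
      by (rule fs_mono) (use b in auto)
    moreover have "card (A \<union> B) \<le> 2^(Suc tA - 1)" using cu True A(2,4)
      by (cases tA) auto
    ultimately show ?thesis using A(1) B(1)
      by (intro conjI finite_UnI exI[of _ "sA(Suc tA := b)"] exI[of _ "Suc tA"]) (assumption | simp)+
  next
    case False
    obtain a where a: "a \<in> A" using join.hyps(1) by blast
    have aB: "a \<notin> B" using a join.hyps(3) by blast
    have "\<forall>j\<in>{1..tB}. phi lt d a (sB j) = \<gamma>"
    proof
      fix j assume "j \<in> {1..tB}"
      then have "sB j \<in> B" using B(3) unfolding falling_star_def by blast
      then show "phi lt d a (sB j) = \<gamma>" using join.hyps(7) a by auto
    qed
    from fs_ext[OF B(3) aB this] have "falling_star lt d (A \<union> B) (sB(Suc tB := a)) (Suc tB)"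
      by (rule fs_mono) (use a in auto)
    moreover have "card (A \<union> B) \<le> 2^(Suc tB - 1)" using cu False B(2,4)
      by (cases tB) auto
    ultimately show ?thesis using A(1) B(1)
      by (intro conjI finite_UnI exI[of _ "sB(Suc tB := a)"] exI[of _ "Suc tB"]) (assumption | simp)+
  qed
qed

theorem lemma3p10:
  fixes lt :: "'a::{field,finite} \<Rightarrow> 'a \<Rightarrow> bool"
    and d p :: nat and S :: "(nat \<Rightarrow> 'a) set"
  assumes "odd (card (UNIV :: 'a set))"
    and "d \<ge> 1"
    and "strict_linorder_on (UNIV - {0}) lt"
    and "S \<subseteq> vecs d"
    and "card S = p" and "p \<ge> 1"
    and "leftover lt d S"
  shows "int (FS lt d S) \<ge> \<lceil>log 2 (real p)\<rceil> + 1"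
proof -
  from main[OF assms(7,4,3)] obtain s t where fin: "finite S" and t: "t \<ge> 1"
    "falling_star lt d S s t" "card S \<le> 2^(t-1)" by blast
  have bnd: "\<And>u. u \<in> {t. \<exists>s. falling_star lt d S s t} \<Longrightarrow> u \<le> card S"
  proof -
    fix u assume "u \<in> {t. \<exists>s. falling_star lt d S s t}"
    then obtain s' where "falling_star lt d S s' u" by auto
    then have "inj_on s' {1..u}" "s' ` {1..u} \<subseteq> S" unfolding falling_star_def by auto
    then have "card {1..u} \<le> card S" using card_inj_on_le fin by blast
    then show "u \<le> card S" by simp
  qed
  have finT: "finite {t. \<exists>s. falling_star lt d S s t}"
  proof (rule finite_subset[of _ "{..card S}"])
    show "{t. \<exists>s. falling_star lt d S s t} \<subseteq> {..card S}" using bnd by blast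
  qed simp
  have "t \<le> FS lt d S" unfolding FS_def by (rule Max_ge[OF finT]) (use t(2) in blast)
  moreover have "\<lceil>log 2 (real p)\<rceil> \<le> int (t - 1)"
  proof -
    have "p \<le> 2 ^ (t-1)" using t(3) assms(5) by simp
    then have "real p \<le> real (2 ^ (t-1))" by (rule of_nat_mono)
    then have "real p \<le> 2 ^ (t-1)" by simp
    then have "log 2 (real p) \<le> log 2 (2 ^ (t-1))" using assms(6) by (intro log_mono) simp_all
    also have "\<dots> = real (t - 1)" by (simp add: log_nat_power)
    finally show ?thesis by (simp add: ceiling_le_iff)
  qed
  ultimately have "\<lceil>log 2 (real p)\<rceil> \<le> int (FS lt d S) - 1" using t(1) by simp
  then show ?thesis by simp
qed

end
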